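(* Let $\rho,\sigma$ be $n$-qubit pure states and let $\epsilon>0$, $\delta>0$. Let $\tilde p_{\mathrm{mix}}$ be a distribution with $\|p_{\mathrm{mix}}-\tilde p_{\mathrm{mix}}\|_{\mathrm{TV}}<\Delta$, and let $M_0=\max(M_0(\rho),M_0(\sigma))$. Let $f=\frac12(1+\mathrm{tr}(\rho\sigma))$ and let $f(N_1,N_2)$ be the symmetric-protocol estimator. Then $|f(N_1,N_2)-f|\le 5\epsilon+2\Delta$ with probability at least $1-\delta$, provided that $$N_1\ge\frac{1}{2\epsilon^2}\log(8/\delta),\qquad N_2\ge\frac{2}{\min(\epsilon^4,\epsilon^2 2^{-2M_0})}\log(8N_1/\delta).$$
   Context: $\log$ is base 2. Pauli strings $P_x$, $x\in\{0,1\}^{2n}$, are the $n$-qubit Hermitian Pauli strings; $\alpha_\rho(x)=\mathrm{tr}(\rho P_x)$; $p_\rho(x)=\alpha_\rho(x)^2/2^n$ for pure $\rho$; $p_{\mathrm{mix}}=\frac12(p_\rho+p_\sigma)$. $M_0(\rho)=\log_2|\{x:\alpha_\rho(x)\ne0\}|-n$. Symmetric protocol: draw $x_1,\dots,x_{N_1}$ i.i.d. from $\tilde p_{\mathrm{mix}}$; for each $i$, measure $P_{x_i}$ $N_2$ times on copies of $\rho$ and $N_2$ times on copies of $\sigma$, obtaining empirical means $\hat\alpha_\rho(x_i),\hat\alpha_\sigma(x_i)$ of the $\pm1$ outcomes; output $f(N_1,N_2)=\frac{1}{N_1}\sum_iG(\hat\alpha_\rho(x_i),\hat\alpha_\sigma(x_i))$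 with $G(u,v)=\frac12\frac{(u+v)^2}{u^2+v^2}$ (and $G(0,0)$ an arbitrary fixed value in $[0,1]$). *)

theory Defs
  imports "HOL-Probability.Probability"
begin

text \<open>Computational basis of n qubits: bit strings of length n.
  An operator is a complex matrix indexed by basis labels.\<close>

definition basis :: "nat \<Rightarrow> bool list set" where
  "basis n = {bs. length bs = n}"

type_synonym op = "bool list \<Rightarrow> bool list \<Rightarrow> complex"

definition tr :: "nat \<Rightarrow> op \<Rightarrow> complex" where
  "tr n A = (\<Sum>r\<in>basis n. A r r)"

definition opmult :: "nat \<Rightarrow> op \<Rightarrow> op \<Rightarrow> op" where
  "opmult n A B = (\<lambda>r c. \<Sum>k\<in>basis n. A r k * B k c)"

definition pure_state :: "nat \<Rightarrow> op \<Rightarrow> bool" where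
  "pure_state n \<rho> \<longleftrightarrow> (\<exists>\<psi> :: bool list \<Rightarrow> complex.
      (\<Sum>b\<in>basis n. (cmod (\<psi> b))\<^sup>2) = 1 \<and>
      (\<forall>r\<in>basis n. \<forall>c\<in>basis n. \<rho> r c = \<psi> r * cnj (\<psi> c)))"

text \<open>A Pauli string label x in {0,1}^(2n) is a list of n bit pairs (a_i,b_i);
  (0,0) = I, (1,0) = X, (0,1) = Z, (1,1) = Y.\<close>

definition paulis :: "nat \<Rightarrow> (bool \<times> bool) list set" where
  "paulis n = {x. length x = n}"

fun pauli1 :: "bool \<times> bool \<Rightarrow> bool \<Rightarrow> bool \<Rightarrow> complex" where
  "pauli1 (False, False) r c = (if r = c then 1 else 0)"
| "pauli1 (True, False) r c = (if r = c then 0 else 1)"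
| "pauli1 (False, True) r c = (if r = c then (if r then -1 else 1) else 0)"
| "pauli1 (True, True) r c = (if r = c then 0 else (if r then \<i> else -\<i>))"

definition pauli :: "(bool \<times> bool) list \<Rightarrow> op" where
  "pauli x = (\<lambda>r c. \<Prod>i<length x. pauli1 (x ! i) (r ! i) (c ! i))"

definition alpha :: "nat \<Rightarrow> op \<Rightarrow> (bool \<times> bool) list \<Rightarrow> real" where
  "alpha n \<rho> x = Re (tr n (opmult n \<rho> (pauli x)))"

definition p_dist :: "nat \<Rightarrow> op \<Rightarrow> (bool \<times> bool) list \<Rightarrow> real" where
  "p_dist n \<rho> x = (alpha n \<rho> x)\<^sup>2 / 2 ^ n"

definition p_mix :: "nat \<Rightarrow> op \<Rightarrow> op \<Rightarrow> (bool \<times> bool) list \<Rightarrow> real" where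
  "p_mix n \<rho> \<sigma> x = (p_dist n \<rho> x + p_dist n \<sigma> x) / 2"

definition M0 :: "nat \<Rightarrow> op \<Rightarrow> real" where
  "M0 n \<rho> = log 2 (real (card {x\<in>paulis n. alpha n \<rho> x \<noteq> 0})) - real n"

definition tv_dist :: "nat \<Rightarrow> ((bool \<times> bool) list \<Rightarrow> real) \<Rightarrow> (bool \<times> bool) list pmf \<Rightarrow> real" where
  "tv_dist n p q = (1/2) * (\<Sum>x\<in>paulis n. \<bar>p x - pmf q x\<bar>)"

text \<open>G(u,v); the value at (0,0) is the fixed parameter g0.\<close>
definition Gfun :: "real \<Rightarrow> real \<Rightarrow> real \<Rightarrow> real" where
  "Gfun g0 u v = (if u = 0 \<and> v = 0 then g0 else (1/2) * (u + v)\<^sup>2 / (u\<^sup>2 + v\<^sup>2))"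

text \<open>Measuring the Pauli observable P_x on state rho gives +1 with probability
  tr(rho (I+P_x)/2) = (1 + alpha(x))/2 (Born rule), else -1.
  Empirical mean of N2 i.i.d. such measurements.\<close>
definition meas_outcome :: "nat \<Rightarrow> op \<Rightarrow> (bool \<times> bool) list \<Rightarrow> real pmf" where
  "meas_outcome n \<rho> x =
     map_pmf (\<lambda>b. if b then 1 else -1) (bernoulli_pmf ((1 + alpha n \<rho> x) / 2))"

definition emp_mean :: "nat \<Rightarrow> op \<Rightarrow> (bool \<times> bool) list \<Rightarrow> nat \<Rightarrow> real pmf" where
  "emp_mean n \<rho> x N2 =
     map_pmf (\<lambda>ys. sum_list ys / real N2) (replicate_pmf N2 (meas_outcome n \<rho> x))"

definition protocol_round ::
  "nat \<Rightarrow> op \<Rightarrow> op \<Rightarrow> (bool \<times> bool) list pmf \<Rightarrow> nat \<Rightarrow> real \<Rightarrow> real pmf" where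
  "protocol_round n \<rho> \<sigma> q N2 g0 = do {
      x \<leftarrow> q;
      u \<leftarrow> emp_mean n \<rho> x N2;
      v \<leftarrow> emp_mean n \<sigma> x N2;
      return_pmf (Gfun g0 u v) }"

text \<open>Distribution of the output f(N1,N2): average over N1 i.i.d. rounds.\<close>
definition sym_protocol ::
  "nat \<Rightarrow> op \<Rightarrow> op \<Rightarrow> (bool \<times> bool) list pmf \<Rightarrow> nat \<Rightarrow> nat \<Rightarrow> real \<Rightarrow> real pmf" where
  "sym_protocol n \<rho> \<sigma> q N1 N2 g0 =
     map_pmf (\<lambda>gs. sum_list gs / real N1) (replicate_pmf N1 (protocol_round n \<rho> \<sigma> q N2 g0))"

end

theory Submission
  imports Defs
begin


lemma lists_len_Suc:
  "{xs::'a list. length xs = Suc n} = (\<lambda>(a,xs). a # xs) ` (UNIV \<times> {xs. length xs = n})"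
  by (auto simp: length_Suc_conv image_iff)

lemma finite_lists_len: "finite {xs::'a::finite list. length xs = n}"
proof -
  have "{xs::'a list. length xs = n} = {xs. set xs \<subseteq> UNIV \<and> length xs = n}" by auto
  thus ?thesis using finite_lists_length_eq[of "UNIV::'a set" n] by simp
qed

lemma sum_prod_lists:
  fixes F :: "nat \<Rightarrow> 'a::finite \<Rightarrow> 'b::comm_semiring_1"
  shows "(\<Sum>xs\<in>{xs. length xs = n}. \<Prod>i<n. F i (xs ! i)) = (\<Prod>i<n. \<Sum>a\<in>UNIV. F i a)"
proof (induction n arbitrary: F)
  case 0
  have "{xs::'a list. length xs = 0} = {[]}" by auto
  then show ?case by simp
next
  case (Suc n)
  have inj: "inj_on (\<lambda>(a,xs). a # xs) (UNIV \<times> {xs::'a list. length xs = n})"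
    by (auto simp: inj_on_def)
  have "(\<Sum>xs\<in>{xs::'a list. length xs = Suc n}. \<Prod>i<Suc n. F i (xs ! i))
      = (\<Sum>(a,xs)\<in>UNIV \<times> {xs::'a list. length xs = n}. \<Prod>i<Suc n. F i ((a#xs) ! i))"
    unfolding lists_len_Suc by (subst sum.reindex[OF inj]) (simp add: case_prod_unfold)
  also have "\<dots> = (\<Sum>a\<in>UNIV. \<Sum>xs\<in>{xs::'a list. length xs = n}. F 0 a * (\<Prod>i<n. F (Suc i) (xs ! i)))"
    by (subst sum.cartesian_product[symmetric]) (simp only: prod.lessThan_Suc_shift nth_Cons_0 nth_Cons_Suc)
  also have "\<dots> = (\<Sum>a\<in>UNIV. F 0 a * (\<Prod>i<n. \<Sum>b\<in>UNIV. F (Suc i) b))"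
    by (simp add: sum_distrib_left[symmetric] Suc.IH[of "\<lambda>i. F (Suc i)"])
  also have "\<dots> = (\<Prod>i<Suc n. \<Sum>a\<in>UNIV. F i a)"
    by (simp only: prod.lessThan_Suc_shift sum_distrib_right)
  finally show ?case .
qed

lemma UNIV_bool_pair: "(UNIV :: (bool \<times> bool) set) = {(False,False),(True,False),(False,True),(True,True)}"
  by auto

lemma pauli1_herm: "cnj (pauli1 s a b) = pauli1 s b a"
  by (cases s; cases "fst s"; cases "snd s"; cases a; cases b; auto)

lemma pauli1_row: "(\<Sum>b\<in>UNIV. cmod (pauli1 s a b)) = 1"
  by (cases s; cases "fst s"; cases "snd s"; cases a; auto simp: UNIV_bool)

lemma pauli1_col: "(\<Sum>a\<in>UNIV. cmod (pauli1 s a b)) = 1"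
  by (cases s; cases "fst s"; cases "snd s"; cases b; auto simp: UNIV_bool)

lemma pauli1_compl: "(\<Sum>s\<in>UNIV. pauli1 s a b * pauli1 s c d) = (if a = d \<and> b = c then 2 else 0)"
  by (cases a; cases b; cases c; cases d; simp add: UNIV_bool_pair)


lemma pauli_row:
  assumes "length x = n" "k \<in> basis n"
  shows "(\<Sum>r\<in>basis n. cmod (pauli x k r)) = 1"
proof -
  have "(\<Sum>r\<in>basis n. cmod (pauli x k r)) = (\<Sum>r\<in>{r. length r = n}. \<Prod>i<n. cmod (pauli1 (x!i) (k!i) (r!i)))"
    using assms by (simp add: basis_def pauli_def prod_norm[symmetric])
  also have "\<dots> = (\<Prod>i<n. \<Sum>b\<in>UNIV. cmod (pauli1 (x!i) (k!i) b))"
    by (rule sum_prod_lists)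
  also have "\<dots> = 1" by (simp add: pauli1_row)
  finally show ?thesis .
qed

lemma pauli_col:
  assumes "length x = n" "r \<in> basis n"
  shows "(\<Sum>k\<in>basis n. cmod (pauli x k r)) = 1"
proof -
  have "(\<Sum>k\<in>basis n. cmod (pauli x k r)) = (\<Sum>k\<in>{k. length k = n}. \<Prod>i<n. cmod (pauli1 (x!i) (k!i) (r!i)))"
    using assms by (simp add: basis_def pauli_def prod_norm[symmetric])
  also have "\<dots> = (\<Prod>i<n. \<Sum>b\<in>UNIV. cmod (pauli1 (x!i) b (r!i)))"
    by (rule sum_prod_lists)
  also have "\<dots> = 1" by (simp add: pauli1_col)
  finally show ?thesis .
qed

lemma pauli_herm: "cnj (pauli x k r) = pauli x r k"
  by (simp add: pauli_def pauli1_herm)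

lemma pauli_compl:
  assumes "k \<in> basis n" "r \<in> basis n" "k' \<in> basis n" "r' \<in> basis n"
  shows "(\<Sum>x\<in>paulis n. pauli x k r * pauli x k' r') = (if k = r' \<and> r = k' then 2 ^ n else 0)"
proof -
  have "(\<Sum>x\<in>paulis n. pauli x k r * pauli x k' r') =
        (\<Sum>x\<in>{x. length x = n}. \<Prod>i<n. pauli1 (x!i) (k!i) (r!i) * pauli1 (x!i) (k'!i) (r'!i))"
    by (simp add: paulis_def pauli_def prod.distrib)
  also have "\<dots> = (\<Prod>i<n. \<Sum>s\<in>UNIV. pauli1 s (k!i) (r!i) * pauli1 s (k'!i) (r'!i))"
    by (rule sum_prod_lists)
  also have "\<dots> = (\<Prod>i<n. if k!i = r'!i \<and> r!i = k'!i then 2 else 0)"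
    by (simp add: pauli1_compl)
  also have "\<dots> = (if k = r' \<and> r = k' then 2 ^ n else 0)"
  proof (cases "k = r' \<and> r = k'")
    case True then show ?thesis by simp
  next
    case False
    then obtain i where "i < n" "\<not> (k!i = r'!i \<and> r!i = k'!i)"
      using assms by (auto simp: basis_def list_eq_iff_nth_eq)
    then show ?thesis using False by (intro trans[OF prod_zero]) auto
  qed
  finally show ?thesis .
qed


lemma tr_opmult: "tr n (opmult n A B) = (\<Sum>r\<in>basis n. \<Sum>k\<in>basis n. A r k * B k r)"
  by (simp add: tr_def opmult_def)

lemma finite_basis[simp]: "finite (basis n)"
  unfolding basis_def by (rule finite_lists_len)

lemma finite_paulis[simp]: "finite (paulis n)"
  unfolding paulis_def by (rule finite_lists_len)

lemma compl_sum:
  "(\<Sum>x\<in>paulis n. tr n (opmult n A (pauli x)) * tr n (opmult n B (pauli x))) = 2 ^ n * tr n (opmult n A B)"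
proof -
  have "(\<Sum>x\<in>paulis n. tr n (opmult n A (pauli x)) * tr n (opmult n B (pauli x))) =
    (\<Sum>x\<in>paulis n. \<Sum>r\<in>basis n. \<Sum>r'\<in>basis n. \<Sum>k\<in>basis n. \<Sum>k'\<in>basis n.
        A r k * B r' k' * (pauli x k r * pauli x k' r'))"
    by (simp add: tr_opmult sum_product mult_ac)
  also have "\<dots> = (\<Sum>r\<in>basis n. \<Sum>r'\<in>basis n. \<Sum>k\<in>basis n. \<Sum>k'\<in>basis n.
        A r k * B r' k' * (\<Sum>x\<in>paulis n. pauli x k r * pauli x k' r'))"
    by (simp only: sum.swap[of _ "paulis n"] sum_distrib_left)
  also have "\<dots> = (\<Sum>r\<in>basis n. \<Sum>r'\<in>basis n. \<Sum>k\<in>basis n. \<Sum>k'\<in>basis n.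
        (if k' = r then (if k = r' then A r k * B r' k' * 2 ^ n else 0) else 0))"
    by (intro sum.cong refl) (auto simp: pauli_compl)
  also have "\<dots> = (\<Sum>r\<in>basis n. \<Sum>r'\<in>basis n. A r r' * B r' r * 2 ^ n)"
    by (intro sum.cong refl) (simp add: sum.delta)
  also have "\<dots> = 2 ^ n * tr n (opmult n A B)"
    by (simp add: tr_opmult sum_distrib_left sum_distrib_right mult_ac)
  finally show ?thesis .
qed


lemma pure_stateE:
  assumes "pure_state n \<rho>"
  obtains \<psi> where "(\<Sum>b\<in>basis n. (cmod (\<psi> b))\<^sup>2) = 1"
    "\<And>r c. r \<in> basis n \<Longrightarrow> c \<in> basis n \<Longrightarrow> \<rho> r c = \<psi> r * cnj (\<psi> c)"
  using assms unfolding pure_state_def by blast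

lemma tr_pauli_real:
  assumes "pure_state n \<rho>"
  shows "Im (tr n (opmult n \<rho> (pauli x))) = 0"
proof -
  obtain \<psi> where r: "\<And>r c. r \<in> basis n \<Longrightarrow> c \<in> basis n \<Longrightarrow> \<rho> r c = \<psi> r * cnj (\<psi> c)"
    using pure_stateE[OF assms] by blast
  let ?z = "tr n (opmult n \<rho> (pauli x))"
  have z: "?z = (\<Sum>r\<in>basis n. \<Sum>k\<in>basis n. \<psi> r * cnj (\<psi> k) * pauli x k r)"
    by (simp add: tr_opmult r)
  have "cnj ?z = (\<Sum>r\<in>basis n. \<Sum>k\<in>basis n. cnj (\<psi> r) * \<psi> k * pauli x r k)"
    by (simp add: z pauli_herm)
  also have "\<dots> = ?z"
    by (subst sum.swap) (simp add: z mult_ac)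
  finally have "cnj ?z = ?z" .
  then have "Im (cnj ?z) = Im ?z" by simp
  then show ?thesis by simp
qed


lemma alpha_bound:
  assumes "pure_state n \<rho>" "length x = n"
  shows "\<bar>alpha n \<rho> x\<bar> \<le> 1"
proof -
  obtain \<psi> where nrm: "(\<Sum>b\<in>basis n. (cmod (\<psi> b))\<^sup>2) = 1" and
    r: "\<And>r c. r \<in> basis n \<Longrightarrow> c \<in> basis n \<Longrightarrow> \<rho> r c = \<psi> r * cnj (\<psi> c)"
    using pure_stateE[OF assms(1)] by blast
  let ?z = "tr n (opmult n \<rho> (pauli x))"
  have z: "?z = (\<Sum>r\<in>basis n. \<Sum>k\<in>basis n. \<psi> r * cnj (\<psi> k) * pauli x k r)"
    by (simp add: tr_opmult r)
  have "cmod ?z \<le> (\<Sum>r\<in>basis n. \<Sum>k\<in>basis n. cmod (\<psi> r * cnj (\<psi> k) * pauli x k r))"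
    unfolding z by (intro order.trans[OF norm_sum] sum_mono norm_sum)
  also have "\<dots> \<le> (\<Sum>r\<in>basis n. \<Sum>k\<in>basis n.
      (1/2) * ((cmod (\<psi> r))\<^sup>2 * cmod (pauli x k r)) + (1/2) * ((cmod (\<psi> k))\<^sup>2 * cmod (pauli x k r)))"
  proof (intro sum_mono)
    fix r k
    have "cmod (\<psi> r) * cmod (\<psi> k) \<le> ((cmod (\<psi> r))\<^sup>2 + (cmod (\<psi> k))\<^sup>2) / 2"
    proof -
      have "0 \<le> (cmod (\<psi> r) - cmod (\<psi> k))\<^sup>2" by simp
      then show ?thesis unfolding power2_diff by (simp add: field_simps)
    qed
    then have that_ineq: "cmod (\<psi> r) * cmod (\<psi> k) * cmod (pauli x k r) \<le> ((cmod (\<psi> r))\<^sup>2 + (cmod (\<psi> k))\<^sup>2) / 2 * cmod (pauli x k r)"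
      by (intro mult_right_mono) auto
    then show "cmod (\<psi> r * cnj (\<psi> k) * pauli x k r) \<le>
      (1/2) * ((cmod (\<psi> r))\<^sup>2 * cmod (pauli x k r)) + (1/2) * ((cmod (\<psi> k))\<^sup>2 * cmod (pauli x k r))"
    proof -
      have "cmod (\<psi> r * cnj (\<psi> k) * pauli x k r) = cmod (\<psi> r) * cmod (\<psi> k) * cmod (pauli x k r)"
        by (simp add: norm_mult)
      with that_ineq show ?thesis by (simp add: field_simps)
    qed
  qed
  also have "\<dots> = (1/2) * (\<Sum>r\<in>basis n. \<Sum>k\<in>basis n. (cmod (\<psi> r))\<^sup>2 * cmod (pauli x k r))
                 + (1/2) * (\<Sum>r\<in>basis n. \<Sum>k\<in>basis n. (cmod (\<psi> k))\<^sup>2 * cmod (pauli x k r))"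
    by (simp add: sum.distrib sum_distrib_left)
  also have "(\<Sum>r\<in>basis n. \<Sum>k\<in>basis n. (cmod (\<psi> k))\<^sup>2 * cmod (pauli x k r)) =
          (\<Sum>k\<in>basis n. \<Sum>r\<in>basis n. (cmod (\<psi> k))\<^sup>2 * cmod (pauli x k r))"
    by (rule sum.swap)
  also have "(\<Sum>k\<in>basis n. \<Sum>r\<in>basis n. (cmod (\<psi> k))\<^sup>2 * cmod (pauli x k r)) =
          (\<Sum>k\<in>basis n. (cmod (\<psi> k))\<^sup>2 * (\<Sum>r\<in>basis n. cmod (pauli x k r)))"
    by (simp add: sum_distrib_left)
  also have "(\<Sum>r\<in>basis n. \<Sum>k\<in>basis n. (cmod (\<psi> r))\<^sup>2 * cmod (pauli x k r)) =
          (\<Sum>r\<in>basis n. (cmod (\<psi> r))\<^sup>2 * (\<Sum>k\<in>basis n. cmod (pauli x k r)))"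
    by (simp add: sum_distrib_left)
  also have "(\<Sum>r\<in>basis n. (cmod (\<psi> r))\<^sup>2 * (\<Sum>k\<in>basis n. cmod (pauli x k r))) = 1"
    using assms(2) by (simp add: pauli_col nrm)
  also have "(\<Sum>k\<in>basis n. (cmod (\<psi> k))\<^sup>2 * (\<Sum>r\<in>basis n. cmod (pauli x k r))) = 1"
    using assms(2) by (simp add: pauli_row nrm)
  finally have "cmod ?z \<le> 1" by simp
  then show ?thesis unfolding alpha_def using abs_Re_le_cmod order.trans by blast
qed


lemma tr_pure_sq:
  assumes "pure_state n \<rho>"
  shows "tr n (opmult n \<rho> \<rho>) = 1"
proof -
  obtain \<psi> where nrm: "(\<Sum>b\<in>basis n. (cmod (\<psi> b))\<^sup>2) = 1" and
    r: "\<And>r c. r \<in> basis n \<Longrightarrow> c \<in> basis n \<Longrightarrow> \<rho> r c = \<psi> r * cnj (\<psi> c)"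
    using pure_stateE[OF assms(1)] by blast
  have "tr n (opmult n \<rho> \<rho>) = (\<Sum>r\<in>basis n. \<Sum>k\<in>basis n. (\<psi> r * cnj (\<psi> r)) * (\<psi> k * cnj (\<psi> k)))"
    by (simp add: tr_opmult r mult_ac)
  also have "\<dots> = (\<Sum>r\<in>basis n. \<Sum>k\<in>basis n. complex_of_real ((cmod (\<psi> r))\<^sup>2 * (cmod (\<psi> k))\<^sup>2))"
    by (simp add: complex_norm_square[symmetric])
  also have "\<dots> = complex_of_real ((\<Sum>b\<in>basis n. (cmod (\<psi> b))\<^sup>2) * (\<Sum>b\<in>basis n. (cmod (\<psi> b))\<^sup>2))"
    by (simp add: sum_product)
  finally show ?thesis by (simp add: nrm)
qed

lemma alpha_compl:
  assumes "pure_state n \<rho>" "pure_state n \<sigma>"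
  shows "(\<Sum>x\<in>paulis n. alpha n \<rho> x * alpha n \<sigma> x) = 2 ^ n * Re (tr n (opmult n \<rho> \<sigma>))"
proof -
  have "(\<Sum>x\<in>paulis n. alpha n \<rho> x * alpha n \<sigma> x) =
      Re (\<Sum>x\<in>paulis n. tr n (opmult n \<rho> (pauli x)) * tr n (opmult n \<sigma> (pauli x)))"
    by (simp add: alpha_def tr_pauli_real[OF assms(1)] tr_pauli_real[OF assms(2)])
  also have "\<dots> = 2 ^ n * Re (tr n (opmult n \<rho> \<sigma>))"
    by (simp add: compl_sum)
  finally show ?thesis .
qed

lemma alpha_sq_sum:
  assumes "pure_state n \<rho>"
  shows "(\<Sum>x\<in>paulis n. (alpha n \<rho> x)\<^sup>2) = 2 ^ n"
  using alpha_compl[OF assms assms] tr_pure_sq[OF assms] by (simp add: power2_eq_square)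


lemma replicate_Pi:
  "replicate_pmf n p = map_pmf (\<lambda>f. map f [0..<n]) (Pi_pmf {..<n} d (\<lambda>_. p))"
proof (induction n)
  case 0
  then show ?case by simp
next
  case (Suc n)
  have A: "{..<Suc n} = insert 0 (Suc ` {..<n})"
    by (auto simp: image_iff) (metis less_Suc_eq_0_disj lessThan_iff)
  have B: "Pi_pmf {..<n} d (\<lambda>_. p) = map_pmf (\<lambda>g. g \<circ> Suc) (Pi_pmf (Suc ` {..<n}) d (\<lambda>_. p))"
    by (rule Pi_pmf_bij_betw) (auto simp: bij_betw_def)
  have C: "map f [0..<Suc n] = f 0 # map (f \<circ> Suc) [0..<n]" for f :: "nat \<Rightarrow> 'a"
    by (simp add: upt_conv_Cons del: upt_Suc) (metis map_Suc_upt map_map)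
  have "map_pmf (\<lambda>f. map f [0..<Suc n]) (Pi_pmf {..<Suc n} d (\<lambda>_. p)) =
     do {y \<leftarrow> p; f \<leftarrow> Pi_pmf (Suc ` {..<n}) d (\<lambda>_. p); return_pmf (y # map (f \<circ> Suc) [0..<n])}"
    unfolding A by (subst Pi_pmf_insert') (auto simp: map_bind_pmf C o_def simp del: upt_Suc)
  also have "\<dots> = do {y \<leftarrow> p; xs \<leftarrow> map_pmf (\<lambda>f. map f [0..<n]) (Pi_pmf {..<n} d (\<lambda>_. p)); return_pmf (y # xs)}"
    unfolding B by (simp add: bind_map_pmf map_pmf_comp o_def)
  also have "\<dots> = replicate_pmf (Suc n) p"
    by (simp add: Suc.IH[symmetric])
  finally show ?case by simp
qed


lemma sum_list_map_upt: "sum_list (map g (map f [0..<n])) = (\<Sum>i<n. g (f i))"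
  by (simp add: sum_set_upt_conv_sum_list_nat[symmetric] atLeast0LessThan o_def)

lemma union_rep:
  "measure_pmf.prob (replicate_pmf n p) {xs. \<exists>x\<in>set xs. x \<in> A} \<le> n * measure_pmf.prob p A"
proof -
  define M where "M = Pi_pmf {..<n} undefined (\<lambda>_. p)"
  have comp: "i < n \<Longrightarrow> map_pmf (\<lambda>f. f i) M = p" for i
    unfolding M_def by (subst Pi_pmf_component) auto
  have rep: "replicate_pmf n p = map_pmf (\<lambda>f. map f [0..<n]) M"
    unfolding M_def by (rule replicate_Pi)
  have "(\<lambda>f. map f [0..<n]) -` {xs. \<exists>x\<in>set xs. x \<in> A} = (\<Union>i\<in>{..<n}. (\<lambda>f. f i) -` A)"
    by auto
  then have "measure_pmf.prob (replicate_pmf n p) {xs. \<exists>x\<in>set xs. x \<in> A} =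
      measure_pmf.prob M (\<Union>i\<in>{..<n}. (\<lambda>f. f i) -` A)"
    unfolding rep by simp
  also have "\<dots> \<le> (\<Sum>i\<in>{..<n}. measure_pmf.prob M ((\<lambda>f. f i) -` A))"
    by (rule measure_pmf.finite_measure_subadditive_finite) auto
  also have "\<dots> = (\<Sum>i\<in>{..<n}. measure_pmf.prob p A)"
  proof (intro sum.cong refl)
    fix i assume "i \<in> {..<n}"
    then have "measure_pmf.prob (map_pmf (\<lambda>f. f i) M) A = measure_pmf.prob p A" using comp by simp
    then show "measure_pmf.prob M ((\<lambda>f. f i) -` A) = measure_pmf.prob p A" by simp
  qed
  finally show ?thesis by simp
qed

lemma replicate_map_pmf: "replicate_pmf n (map_pmf f p) = map_pmf (map f) (replicate_pmf n p)"
  by (induction n) (simp_all add: map_bind_pmf bind_map_pmf)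


lemma sum_list_map_upt2: "sum_list (map h [0..<n]) = (\<Sum>i<n. h i)"
  by (simp add: sum_set_upt_conv_sum_list_nat[symmetric] atLeast0LessThan)

lemma hoeff_rep:
  fixes p :: "'a pmf" and g :: "'a \<Rightarrow> real"
  assumes bnd: "\<And>x. x \<in> set_pmf p \<Longrightarrow> g x \<in> {a..b}" and ab: "a < b" and n: "n > 0" and e: "\<epsilon> \<ge> 0"
  shows "measure_pmf.prob (replicate_pmf n p) {xs. sum_list (map g xs) / real n \<ge> measure_pmf.expectation p g + \<epsilon>}
           \<le> exp (-2 * real n * \<epsilon>\<^sup>2 / (b - a)\<^sup>2) \<and> measure_pmf.prob (replicate_pmf n p) {xs. sum_list (map g xs) / real n \<le> measure_pmf.expectation p g - \<epsilon>}
           \<le> exp (-2 * real n * \<epsilon>\<^sup>2 / (b - a)\<^sup>2)"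
proof -
  define M where "M = Pi_pmf {..<n} undefined (\<lambda>_. p)"
  have comp: "i < n \<Longrightarrow> map_pmf (\<lambda>f. f i) M = p" for i
    unfolding M_def by (subst Pi_pmf_component) auto
  have distr_eq: "i < n \<Longrightarrow> distr (measure_pmf M) borel (\<lambda>f. g (f i)) = distr (measure_pmf p) borel g" for i
  proof -
    assume i: "i < n"
    have "distr (measure_pmf M) borel (\<lambda>f. g (f i)) = distr (measure_pmf (map_pmf (\<lambda>f. f i) M)) borel g"
      unfolding map_pmf_rep_eq by (subst distr_distr) (auto simp: o_def)
    then show ?thesis using comp[OF i] by simp
  qed
  have mu: "measure_pmf.expectation M (\<lambda>f. g (f 0)) = measure_pmf.expectation p g"
  proof -
    have "measure_pmf.expectation M (\<lambda>f. g (f 0)) = measure_pmf.expectation (map_pmf (\<lambda>f. f 0) M) g"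
      by simp
    then show ?thesis using comp[of 0] n by simp
  qed
  have rep: "replicate_pmf n p = map_pmf (\<lambda>f. map f [0..<n]) M"
    unfolding M_def by (rule replicate_Pi)
  have ne: "{..<n} \<noteq> {}" using n by auto
  interpret H: Hoeffding_ineq_iid "measure_pmf M" "{..<n}" "\<lambda>i f. g (f i)" "\<lambda>f. g (f 0)" a b
    "measure_pmf.expectation M (\<lambda>f. g (f 0))"
  proof unfold_locales
    show "prob_space.indep_vars (measure_pmf M) (\<lambda>_. borel) (\<lambda>i f. g (f i)) {..<n}"
      unfolding M_def
      by (intro prob_space.indep_vars_compose2[OF _ indep_vars_Pi_pmf])
         (auto simp: measure_pmf.prob_space_axioms)
    show "AE x in measure_pmf M. g (x 0) \<in> {a..b}"
    proof (rule AE_pmfI)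
      fix f assume "f \<in> set_pmf M"
      then have "f 0 \<in> set_pmf (map_pmf (\<lambda>f. f 0) M)" by simp
      then show "g (f 0) \<in> {a..b}" using comp[of 0] n bnd by simp
    qed
  next
    show "finite {..<n}" by simp
  next
    fix i assume "i \<in> {..<n}"
    then show "distr (measure_pmf M) borel (\<lambda>f. g (f i)) = distr (measure_pmf M) borel (\<lambda>f. g (f 0))"
      using distr_eq[of i] distr_eq[of 0] n by simp
  next
    show "(\<lambda>f. g (f 0)) \<in> measurable (measure_pmf M) borel" by simp
  qed
  have "measure_pmf.prob (replicate_pmf n p) {xs. sum_list (map g xs) / real n \<ge> measure_pmf.expectation p g + \<epsilon>}
           \<le> exp (-2 * real n * \<epsilon>\<^sup>2 / (b - a)\<^sup>2)"
    using H.Hoeffding_ineq_ge'[OF e ab ne] unfolding rep mu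
    by (simp add: sum_list_map_upt2 o_def vimage_def)
  moreover have "measure_pmf.prob (replicate_pmf n p) {xs. sum_list (map g xs) / real n \<le> measure_pmf.expectation p g - \<epsilon>}
           \<le> exp (-2 * real n * \<epsilon>\<^sup>2 / (b - a)\<^sup>2)"
    using H.Hoeffding_ineq_le'[OF e ab ne] unfolding rep mu
    by (simp add: sum_list_map_upt2 o_def vimage_def)
  ultimately show ?thesis by blast
qed


lemma G_range:
  assumes "0 \<le> g0" "g0 \<le> 1"
  shows "0 \<le> Gfun g0 u v \<and> Gfun g0 u v \<le> 1"
proof (cases "u = 0 \<and> v = 0")
  case True then show ?thesis using assms by (simp add: Gfun_def)
next
  case False
  then have pos: "u\<^sup>2 + v\<^sup>2 > 0" by (simp add: sum_power2_gt_zero_iff)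
  have "(u + v)\<^sup>2 \<le> 2 * (u\<^sup>2 + v\<^sup>2)"
  proof -
    have "0 \<le> (u - v)\<^sup>2" by simp
    then show ?thesis by (simp add: power2_eq_square algebra_simps)
  qed
  then show ?thesis using False pos assms by (simp add: Gfun_def field_simps)
qed

lemma G_alt:
  assumes "u\<^sup>2 + v\<^sup>2 > 0"
  shows "Gfun g0 u v = 1/2 + u * v / (u\<^sup>2 + v\<^sup>2)"
proof -
  have nz: "\<not> (u = 0 \<and> v = 0)"
  proof
    assume "u = 0 \<and> v = 0" then show False using assms by simp
  qed
  have S: "u\<^sup>2 + v\<^sup>2 \<noteq> 0" using assms by linarith
  have e: "(u + v)\<^sup>2 = (u\<^sup>2 + v\<^sup>2) + 2 * (u * v)" by (simp add: power2_eq_square algebra_simps)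
  have "Gfun g0 u v = 1/2 * ((u\<^sup>2 + v\<^sup>2) + 2 * (u * v)) / (u\<^sup>2 + v\<^sup>2)"
    by (simp only: Gfun_def nz if_False e)
  also have "\<dots> = 1/2 + u * v / (u\<^sup>2 + v\<^sup>2)"
    using S by (simp add: field_simps)
  finally show ?thesis .
qed

lemma G_lip:
  assumes U: "u\<^sup>2 + v\<^sup>2 > 0" and A: "a\<^sup>2 + b\<^sup>2 > 0" and tu: "\<bar>u - a\<bar> \<le> t" and tv: "\<bar>v - b\<bar> \<le> t"
  shows "(Gfun g0 u v - Gfun g0 a b)\<^sup>2 * (a\<^sup>2 + b\<^sup>2) \<le> 2 * t\<^sup>2"
proof -
  define UU where "UU = u\<^sup>2 + v\<^sup>2"
  define AA where "AA = a\<^sup>2 + b\<^sup>2"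
  define X where "X = (u * a - v * b)\<^sup>2"
  define Y where "Y = (v * a - u * b)\<^sup>2"
  have UUp: "UU > 0" and AAp: "AA > 0" using U A by (simp_all add: UU_def AA_def)
  have D: "Gfun g0 u v - Gfun g0 a b = (u * a - v * b) * (v * a - u * b) / (UU * AA)"
  proof -
    have "Gfun g0 u v - Gfun g0 a b = u * v / UU - a * b / AA"
      unfolding G_alt[OF U] G_alt[OF A] UU_def AA_def by simp
    also have "\<dots> = (u * v * AA - a * b * UU) / (UU * AA)"
      using UUp AAp by (simp add: diff_frac_eq)
    also have "u * v * AA - a * b * UU = (u * a - v * b) * (v * a - u * b)"
      by (simp add: UU_def AA_def power2_eq_square algebra_simps)
    finally show ?thesis .
  qed
  have X: "X \<le> UU * AA"
  proof -
    have "X + (u * b + v * a)\<^sup>2 = UU * AA" by (simp add: X_def UU_def AA_def power2_eq_square algebra_simps)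
    moreover have "0 \<le> (u * b + v * a)\<^sup>2" by simp
    ultimately show ?thesis by linarith
  qed
  have t1: "(a - u)\<^sup>2 \<le> t\<^sup>2" using tu by (simp add: abs_le_square_iff[symmetric] abs_minus_commute)
  have t2: "(v - b)\<^sup>2 \<le> t\<^sup>2" using tv by (simp add: abs_le_square_iff[symmetric])
  have Y: "Y \<le> 2 * t\<^sup>2 * UU"
  proof -
    have "Y + ((a - u) * u - v * (v - b))\<^sup>2 = ((a-u)\<^sup>2 + (v-b)\<^sup>2) * UU"
      by (simp add: Y_def UU_def power2_eq_square algebra_simps)
    moreover have "0 \<le> ((a - u) * u - v * (v - b))\<^sup>2" by simp
    moreover have "((a-u)\<^sup>2 + (v-b)\<^sup>2) * UU \<le> (2 * t\<^sup>2) * UU"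
      using t1 t2 UUp by (intro mult_right_mono) auto
    ultimately show ?thesis by linarith
  qed
  have "(Gfun g0 u v - Gfun g0 a b)\<^sup>2 * AA = X * Y / (UU\<^sup>2 * AA)"
    using UUp AAp by (simp add: D X_def Y_def power_mult_distrib power2_eq_square field_simps)
  also have "\<dots> \<le> (UU * AA) * (2 * t\<^sup>2 * UU) / (UU\<^sup>2 * AA)"
    using X Y UUp AAp by (intro divide_right_mono mult_mono) (auto simp: X_def Y_def)
  also have "\<dots> = 2 * t\<^sup>2"
    using UUp AAp by (simp add: power2_eq_square field_simps)
  finally show ?thesis by (simp add: AA_def)
qed

lemma sum_pmix:
  assumes "pure_state n \<rho>" "pure_state n \<sigma>"
  shows "(\<Sum>x\<in>paulis n. p_mix n \<rho> \<sigma> x) = 1"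
proof -
  have "(\<Sum>x\<in>paulis n. p_mix n \<rho> \<sigma> x) =
     ((\<Sum>x\<in>paulis n. (alpha n \<rho> x)\<^sup>2) + (\<Sum>x\<in>paulis n. (alpha n \<sigma> x)\<^sup>2)) / (2 * 2 ^ n)"
    by (simp add: p_mix_def p_dist_def sum_divide_distrib[symmetric] sum.distrib field_simps)
  then show ?thesis by (simp add: alpha_sq_sum assms)
qed

lemma pmix_nonneg: "p_mix n \<rho> \<sigma> x \<ge> 0"
  by (simp add: p_mix_def p_dist_def)

lemma f_eq:
  assumes "pure_state n \<rho>" "pure_state n \<sigma>"
  shows "(\<Sum>x\<in>paulis n. p_mix n \<rho> \<sigma> x * Gfun g0 (alpha n \<rho> x) (alpha n \<sigma> x))
          = (1 + Re (tr n (opmult n \<rho> \<sigma>))) / 2"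
proof -
  have pt: "p_mix n \<rho> \<sigma> x * Gfun g0 (alpha n \<rho> x) (alpha n \<sigma> x) =
     ((alpha n \<rho> x)\<^sup>2 + (alpha n \<sigma> x)\<^sup>2 + 2 * (alpha n \<rho> x * alpha n \<sigma> x)) / (4 * 2 ^ n)" for x
  proof (cases "alpha n \<rho> x = 0 \<and> alpha n \<sigma> x = 0")
    case True then show ?thesis by (simp add: p_mix_def p_dist_def)
  next
    case False
    then have pos: "(alpha n \<rho> x)\<^sup>2 + (alpha n \<sigma> x)\<^sup>2 > 0" by (simp add: sum_power2_gt_zero_iff)
    have F: "\<not> (alpha n \<rho> x = 0 \<and> alpha n \<sigma> x = 0)" using False by blast
    let ?a = "alpha n \<rho> x" and ?b = "alpha n \<sigma> x"
    have S: "?a\<^sup>2 + ?b\<^sup>2 \<noteq> 0" using pos by linarith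
    have pm: "p_mix n \<rho> \<sigma> x = (?a\<^sup>2 + ?b\<^sup>2) / (2 * 2 ^ n)"
      by (simp add: p_mix_def p_dist_def field_simps)
    have g: "Gfun g0 ?a ?b = (?a + ?b)\<^sup>2 / (2 * (?a\<^sup>2 + ?b\<^sup>2))"
      using F by (simp only: Gfun_def if_False) simp
    have e: "(?a + ?b)\<^sup>2 = ?a\<^sup>2 + ?b\<^sup>2 + 2 * (?a * ?b)" by (simp add: power2_eq_square algebra_simps)
    have aux: "(SS / (2 * N)) * (T / (2 * SS)) = T / (4 * N)" if "SS \<noteq> 0" for SS N T :: real
      using that by (simp add: field_simps)
    show ?thesis unfolding pm g e by (rule aux[OF S])
  qed
  have "(\<Sum>x\<in>paulis n. p_mix n \<rho> \<sigma> x * Gfun g0 (alpha n \<rho> x) (alpha n \<sigma> x)) =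
    ((\<Sum>x\<in>paulis n. (alpha n \<rho> x)\<^sup>2) + (\<Sum>x\<in>paulis n. (alpha n \<sigma> x)\<^sup>2)
      + 2 * (\<Sum>x\<in>paulis n. alpha n \<rho> x * alpha n \<sigma> x)) / (4 * 2 ^ n)"
    unfolding pt by (simp add: sum_divide_distrib[symmetric] sum.distrib sum_distrib_left)
  also have "\<dots> = (2 ^ n + 2 ^ n + 2 * (2 ^ n * Re (tr n (opmult n \<rho> \<sigma>)))) / (4 * 2 ^ n)"
    by (simp add: alpha_sq_sum alpha_compl assms)
  also have "\<dots> = (1 + Re (tr n (opmult n \<rho> \<sigma>))) / 2"
    by (simp add: field_simps)
  finally show ?thesis .
qed


lemma meas_expect:
  assumes "\<bar>alpha n \<rho> x\<bar> \<le> 1"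
  shows "measure_pmf.expectation (meas_outcome n \<rho> x) (\<lambda>y. y) = alpha n \<rho> x"
proof -
  have "0 \<le> (1 + alpha n \<rho> x) / 2" "(1 + alpha n \<rho> x) / 2 \<le> 1" using assms by auto
  then show ?thesis by (simp add: meas_outcome_def field_simps)
qed

lemma meas_range: "y \<in> set_pmf (meas_outcome n \<rho> x) \<Longrightarrow> y \<in> {-1..1}"
  by (auto simp: meas_outcome_def)

lemma emp_dev:
  assumes "\<bar>alpha n \<rho> x\<bar> \<le> 1" "N2 > 0" "t \<ge> 0"
  shows "measure_pmf.prob (emp_mean n \<rho> x N2) {u. \<bar>u - alpha n \<rho> x\<bar> \<ge> t} \<le> 2 * exp (- real N2 * t\<^sup>2 / 2)"
proof -
  let ?R = "replicate_pmf N2 (meas_outcome n \<rho> x)"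
  have h: "measure_pmf.prob ?R {xs. sum_list (map (\<lambda>y. y) xs) / real N2 \<ge> measure_pmf.expectation (meas_outcome n \<rho> x) (\<lambda>y. y) + t}
           \<le> exp (-2 * real N2 * t\<^sup>2 / (1 - (-1))\<^sup>2) \<and>
         measure_pmf.prob ?R {xs. sum_list (map (\<lambda>y. y) xs) / real N2 \<le> measure_pmf.expectation (meas_outcome n \<rho> x) (\<lambda>y. y) - t}
           \<le> exp (-2 * real N2 * t\<^sup>2 / (1 - (-1))\<^sup>2)"
    by (rule hoeff_rep) (use assms meas_range in auto)
  have eq: "exp (-2 * real N2 * t\<^sup>2 / (1 - (-1))\<^sup>2) = exp (- real N2 * t\<^sup>2 / 2)"
    by (simp add: power2_eq_square)
  have "measure_pmf.prob (emp_mean n \<rho> x N2) {u. \<bar>u - alpha n \<rho> x\<bar> \<ge> t} =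
        measure_pmf.prob ?R ({xs. sum_list xs / real N2 \<ge> alpha n \<rho> x + t} \<union> {xs. sum_list xs / real N2 \<le> alpha n \<rho> x - t})"
    unfolding emp_mean_def by (simp add: vimage_def) (intro arg_cong[where f="measure_pmf.prob ?R"]; auto)
  also have "\<dots> \<le> measure_pmf.prob ?R {xs. sum_list xs / real N2 \<ge> alpha n \<rho> x + t} +
                  measure_pmf.prob ?R {xs. sum_list xs / real N2 \<le> alpha n \<rho> x - t}"
    by (rule measure_Un_le) auto
  also have "\<dots> \<le> 2 * exp (- real N2 * t\<^sup>2 / 2)"
    using h unfolding eq meas_expect[OF assms(1)] by simp
  finally show ?thesis .
qed

lemma prob_bind_le:
  assumes "\<And>x. x \<in> set_pmf p \<Longrightarrow> measure_pmf.prob (K x) A \<le> c"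
  shows "measure_pmf.prob (bind_pmf p K) A \<le> c"
proof -
  obtain x0 where x0: "x0 \<in> set_pmf p" using set_pmf_not_empty[of p] by blast
  have c: "c \<ge> 0" using assms[OF x0] measure_nonneg order.trans by blast
  have "emeasure (measure_pmf (bind_pmf p K)) A = (\<integral>\<^sup>+x. emeasure (measure_pmf (K x)) A \<partial>measure_pmf p)"
    by simp
  also have "\<dots> \<le> (\<integral>\<^sup>+x. ennreal c \<partial>measure_pmf p)"
    by (intro nn_integral_mono_AE AE_pmfI) (simp add: measure_pmf.emeasure_eq_measure assms c)
  also have "\<dots> = ennreal c" by (simp add: measure_pmf.emeasure_space_1)
  finally show ?thesis using c by (simp add: measure_pmf.emeasure_eq_measure)
qed

definition Rnd :: "nat \<Rightarrow> op \<Rightarrow> op \<Rightarrow> (bool \<times> bool) list pmf \<Rightarrow> nat \<Rightarrow> ((bool \<times> bool) list \<times> real \<times> real) pmf" where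
  "Rnd n \<rho> \<sigma> q N2 = bind_pmf q (\<lambda>x. map_pmf (\<lambda>(u,v). (x,u,v)) (pair_pmf (emp_mean n \<rho> x N2) (emp_mean n \<sigma> x N2)))"

lemma round_eq: "protocol_round n \<rho> \<sigma> q N2 g0 = map_pmf (\<lambda>(x,u,v). Gfun g0 u v) (Rnd n \<rho> \<sigma> q N2)"
  unfolding protocol_round_def Rnd_def
  by (simp add: map_bind_pmf pmf.map_comp o_def pair_pmf_def case_prod_unfold)

lemma sym_eq: "sym_protocol n \<rho> \<sigma> q N1 N2 g0 =
   map_pmf (\<lambda>ts. sum_list (map (\<lambda>(x,u,v). Gfun g0 u v) ts) / real N1) (replicate_pmf N1 (Rnd n \<rho> \<sigma> q N2))"
  unfolding sym_protocol_def round_eq replicate_map_pmf by (simp add: pmf.map_comp o_def)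

lemma fst_Rnd: "map_pmf fst (Rnd n \<rho> \<sigma> q N2) = q"
  unfolding Rnd_def by (simp add: map_bind_pmf pmf.map_comp o_def case_prod_unfold bind_return_pmf')

lemma set_Rnd: "y \<in> set_pmf (Rnd n \<rho> \<sigma> q N2) \<Longrightarrow> fst y \<in> set_pmf q"
proof -
  assume "y \<in> set_pmf (Rnd n \<rho> \<sigma> q N2)"
  then have "fst y \<in> set_pmf (map_pmf fst (Rnd n \<rho> \<sigma> q N2))" by simp
  then show ?thesis by (simp add: fst_Rnd)
qed

lemma Rnd_bad:
  assumes pr: "pure_state n \<rho>" and ps: "pure_state n \<sigma>" and q: "set_pmf q \<subseteq> paulis n"
    and N2: "N2 > 0" and t: "t \<ge> 0"
  shows "measure_pmf.prob (Rnd n \<rho> \<sigma> q N2)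
           {(x,u,v). \<bar>u - alpha n \<rho> x\<bar> \<ge> t \<or> \<bar>v - alpha n \<sigma> x\<bar> \<ge> t} \<le> 4 * exp (- real N2 * t\<^sup>2 / 2)"
  unfolding Rnd_def
proof (rule prob_bind_le)
  fix x assume x: "x \<in> set_pmf q"
  then have len: "length x = n" using q by (auto simp: paulis_def)
  let ?P = "pair_pmf (emp_mean n \<rho> x N2) (emp_mean n \<sigma> x N2)"
  have "measure_pmf.prob (map_pmf (\<lambda>(u,v). (x,u,v)) ?P)
           {(x,u,v). \<bar>u - alpha n \<rho> x\<bar> \<ge> t \<or> \<bar>v - alpha n \<sigma> x\<bar> \<ge> t} =
        measure_pmf.prob ?P (fst -` {u. \<bar>u - alpha n \<rho> x\<bar> \<ge> t} \<union> snd -` {v. \<bar>v - alpha n \<sigma> x\<bar> \<ge> t})"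
    by (simp add: vimage_def case_prod_unfold) (intro arg_cong[where f="measure_pmf.prob ?P"]; auto)
  also have "\<dots> \<le> measure_pmf.prob ?P (fst -` {u. \<bar>u - alpha n \<rho> x\<bar> \<ge> t}) +
                  measure_pmf.prob ?P (snd -` {v. \<bar>v - alpha n \<sigma> x\<bar> \<ge> t})"
    by (rule measure_Un_le) auto
  also have "measure_pmf.prob ?P (fst -` {u. \<bar>u - alpha n \<rho> x\<bar> \<ge> t}) =
             measure_pmf.prob (map_pmf fst ?P) {u. \<bar>u - alpha n \<rho> x\<bar> \<ge> t}" by simp
  also have "\<dots> \<le> 2 * exp (- real N2 * t\<^sup>2 / 2)"
    unfolding map_fst_pair_pmf by (rule emp_dev[OF alpha_bound[OF pr len] N2 t])
  also have "measure_pmf.prob ?P (snd -` {v. \<bar>v - alpha n \<sigma> x\<bar> \<ge> t}) =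
             measure_pmf.prob (map_pmf snd ?P) {v. \<bar>v - alpha n \<sigma> x\<bar> \<ge> t}" by simp
  also have "\<dots> \<le> 2 * exp (- real N2 * t\<^sup>2 / 2)"
    unfolding map_snd_pair_pmf by (rule emp_dev[OF alpha_bound[OF ps len] N2 t])
  finally show "measure_pmf.prob (map_pmf (\<lambda>(u,v). (x,u,v)) ?P)
           {(x,u,v). \<bar>u - alpha n \<rho> x\<bar> \<ge> t \<or> \<bar>v - alpha n \<sigma> x\<bar> \<ge> t} \<le> 4 * exp (- real N2 * t\<^sup>2 / 2)"
    by simp
qed


lemma card_supp:
  "real (card {x\<in>paulis n. alpha n \<rho> x \<noteq> 0}) \<le> 2 powr (M0 n \<rho> + real n)"
proof (cases "card {x\<in>paulis n. alpha n \<rho> x \<noteq> 0} = 0")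
  case True then show ?thesis by (simp only: True of_nat_0) simp
next
  case False
  then have "card {x\<in>paulis n. alpha n \<rho> x \<noteq> 0} > 0" by linarith
  then have pos: "real (card {x\<in>paulis n. alpha n \<rho> x \<noteq> 0}) > 0" by (simp only: of_nat_0_less_iff)
  have "real (card {x\<in>paulis n. alpha n \<rho> x \<noteq> 0}) = 2 powr (log 2 (real (card {x\<in>paulis n. alpha n \<rho> x \<noteq> 0})))"
    using pos by simp
  also have "log 2 (real (card {x\<in>paulis n. alpha n \<rho> x \<noteq> 0})) = M0 n \<rho> + real n"
    by (simp add: M0_def)
  finally show ?thesis by simp
qed

lemma bad_mass:
  fixes n :: nat and \<rho> \<sigma> :: op and \<epsilon> :: real
  assumes eps: "\<epsilon> > 0"
  defines "Mx \<equiv> max (M0 n \<rho>) (M0 n \<sigma>)"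
  defines "tau \<equiv> \<epsilon> * 2 powr (- Mx)"
  shows "(\<Sum>x\<in>paulis n. if tau < (alpha n \<rho> x)\<^sup>2 + (alpha n \<sigma> x)\<^sup>2 then 0 else p_mix n \<rho> \<sigma> x) \<le> \<epsilon>"
proof -
  define S1 where "S1 = {x\<in>paulis n. alpha n \<rho> x \<noteq> 0}"
  define S2 where "S2 = {x\<in>paulis n. alpha n \<sigma> x \<noteq> 0}"
  define c where "c = tau / (2 * 2 ^ n)"
  have c0: "c \<ge> 0" using eps by (simp add: c_def tau_def)
  have fin1: "finite S1" and fin2: "finite S2" by (simp_all add: S1_def S2_def)
  have "(\<Sum>x\<in>paulis n. if tau < (alpha n \<rho> x)\<^sup>2 + (alpha n \<sigma> x)\<^sup>2 then 0 else p_mix n \<rho> \<sigma> x)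
        \<le> (\<Sum>x\<in>paulis n. if x \<in> S1 \<union> S2 then c else 0)"
  proof (intro sum_mono)
    fix x assume x: "x \<in> paulis n"
    show "(if tau < (alpha n \<rho> x)\<^sup>2 + (alpha n \<sigma> x)\<^sup>2 then 0 else p_mix n \<rho> \<sigma> x) \<le> (if x \<in> S1 \<union> S2 then c else 0)"
    proof (cases "x \<in> S1 \<union> S2")
      case True
      have "p_mix n \<rho> \<sigma> x = ((alpha n \<rho> x)\<^sup>2 + (alpha n \<sigma> x)\<^sup>2) / (2 * 2 ^ n)"
        by (simp add: p_mix_def p_dist_def field_simps)
      then show ?thesis using True c0 by (auto simp: c_def divide_right_mono)
    next
      case False
      then have "alpha n \<rho> x = 0" "alpha n \<sigma> x = 0" using x by (auto simp: S1_def S2_def)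
      then show ?thesis using False by (simp add: p_mix_def p_dist_def)
    qed
  qed
  also have "\<dots> = real (card (S1 \<union> S2)) * c"
  proof -
    have "S1 \<union> S2 \<subseteq> paulis n" by (auto simp: S1_def S2_def)
    then have "(\<Sum>x\<in>paulis n. if x \<in> S1 \<union> S2 then c else 0) = (\<Sum>x\<in>S1 \<union> S2. c)"
      by (intro sum.mono_neutral_cong_right) auto
    then show ?thesis by simp
  qed
  also have "\<dots> \<le> (real (card S1) + real (card S2)) * c"
    using c0 card_Un_le[of S1 S2] by (intro mult_right_mono) (simp_all add: of_nat_add[symmetric] del: of_nat_add)
  also have "\<dots> \<le> (2 powr (Mx + real n) + 2 powr (Mx + real n)) * c"
  proof (intro mult_right_mono add_mono c0)
    show "real (card S1) \<le> 2 powr (Mx + real n)"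
      using card_supp[of n \<rho>] unfolding S1_def Mx_def by (rule order.trans) simp
    show "real (card S2) \<le> 2 powr (Mx + real n)"
      using card_supp[of n \<sigma>] unfolding S2_def Mx_def by (rule order.trans) simp
  qed
  also have "\<dots> = \<epsilon> * (2 powr (Mx + real n) * 2 powr (- Mx)) / 2 ^ n"
    by (simp add: c_def tau_def field_simps)
  also have "2 powr (Mx + real n) * 2 powr (- Mx) = 2 ^ n"
    by (simp add: powr_add[symmetric] powr_realpow)
  finally show ?thesis by simp
qed

lemma expect_bounds:
  assumes pr: "pure_state n \<rho>" and ps: "pure_state n \<sigma>" and q: "set_pmf q \<subseteq> paulis n"
    and g: "0 \<le> g0" "g0 \<le> 1" and e: "e \<ge> 0"
    and hb: "(\<Sum>x\<in>paulis n. if tau < (alpha n \<rho> x)\<^sup>2 + (alpha n \<sigma> x)\<^sup>2 then 0 else p_mix n \<rho> \<sigma> x) \<le> \<epsilon>"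
  shows "(\<Sum>x\<in>paulis n. (if tau < (alpha n \<rho> x)\<^sup>2 + (alpha n \<sigma> x)\<^sup>2 then Gfun g0 (alpha n \<rho> x) (alpha n \<sigma> x) - e else 0) * pmf q x)
           \<ge> (1 + Re (tr n (opmult n \<rho> \<sigma>))) / 2 - 2 * tv_dist n (p_mix n \<rho> \<sigma>) q - e - \<epsilon>"
    and "(\<Sum>x\<in>paulis n. (if tau < (alpha n \<rho> x)\<^sup>2 + (alpha n \<sigma> x)\<^sup>2 then Gfun g0 (alpha n \<rho> x) (alpha n \<sigma> x) + e else 1) * pmf q x)
           \<le> (1 + Re (tr n (opmult n \<rho> \<sigma>))) / 2 + 2 * tv_dist n (p_mix n \<rho> \<sigma>) q + e + \<epsilon>"
proof -
  define G where "G x = Gfun g0 (alpha n \<rho> x) (alpha n \<sigma> x)" for x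
  define pm where "pm x = p_mix n \<rho> \<sigma> x" for x
  define pq where "pq x = pmf q x" for x
  define gd where "gd x = (tau < (alpha n \<rho> x)\<^sup>2 + (alpha n \<sigma> x)\<^sup>2)" for x
  have G01: "0 \<le> G x" "G x \<le> 1" for x using G_range[OF g] by (auto simp: G_def)
  have pm0: "pm x \<ge> 0" for x by (simp add: pm_def pmix_nonneg)
  have pq0: "pq x \<ge> 0" for x by (simp add: pq_def)
  have F: "(\<Sum>x\<in>paulis n. pm x * G x) = (1 + Re (tr n (opmult n \<rho> \<sigma>))) / 2"
    unfolding pm_def G_def by (rule f_eq[OF pr ps])
  have tv: "(\<Sum>x\<in>paulis n. \<bar>pm x - pq x\<bar>) = 2 * tv_dist n (p_mix n \<rho> \<sigma>) q"
    by (simp add: tv_dist_def pm_def pq_def)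
  have sq: "(\<Sum>x\<in>paulis n. pq x) = 1"
    unfolding pq_def by (rule sum_pmf_eq_1) (simp_all add: q)
  have hb': "(\<Sum>x\<in>paulis n. if gd x then 0 else pm x) \<le> \<epsilon>" using hb by (simp only: gd_def pm_def)
  have key: "\<bar>G x * (pq x - pm x)\<bar> \<le> \<bar>pm x - pq x\<bar>" for x
  proof -
    have "\<bar>G x * (pq x - pm x)\<bar> = G x * \<bar>pm x - pq x\<bar>" using G01[of x] by (simp add: abs_mult abs_minus_commute)
    also have "\<dots> \<le> \<bar>pm x - pq x\<bar>" using G01[of x] by (intro mult_left_le_one_le) auto
    finally show ?thesis .
  qed
  have lo: "(if gd x then G x - e else 0) * pq x \<ge> pm x * G x - \<bar>pm x - pq x\<bar> - e * pq x - (if gd x then 0 else pm x)" for x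
  proof (cases "gd x")
    case True
    have "(G x - e) * pq x = pm x * G x + G x * (pq x - pm x) - e * pq x" by (simp add: algebra_simps)
    then show ?thesis using True key[of x] abs_ge_minus_self[of "G x * (pq x - pm x)"] by simp
  next
    case False
    have "pm x * G x \<le> pm x" using G01[of x] pm0[of x] by (intro mult_right_le_one_le) auto
    moreover have "e * pq x \<ge> 0" using e pq0[of x] by simp
    moreover have "\<bar>pm x - pq x\<bar> \<ge> 0" by simp
    ultimately show ?thesis using False by simp
  qed
  have up: "(if gd x then G x + e else 1) * pq x \<le> pm x * G x + \<bar>pm x - pq x\<bar> + e * pq x + (if gd x then 0 else pm x)" for x
  proof (cases "gd x")
    case True
    have "(G x + e) * pq x = pm x * G x + G x * (pq x - pm x) + e * pq x" by (simp add: algebra_simps)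
    then show ?thesis using True key[of x] abs_ge_self[of "G x * (pq x - pm x)"] by simp
  next
    case False
    have "pm x * G x \<ge> 0" using G01[of x] pm0[of x] by simp
    moreover have "pq x \<le> pm x + \<bar>pm x - pq x\<bar>" by linarith
    moreover have "e * pq x \<ge> 0" using e pq0[of x] by simp
    ultimately show ?thesis using False by simp
  qed
  have "(\<Sum>x\<in>paulis n. (if gd x then G x - e else 0) * pq x) \<ge>
        (\<Sum>x\<in>paulis n. pm x * G x - \<bar>pm x - pq x\<bar> - e * pq x - (if gd x then 0 else pm x))"
    by (intro sum_mono lo)
  also have "(\<Sum>x\<in>paulis n. pm x * G x - \<bar>pm x - pq x\<bar> - e * pq x - (if gd x then 0 else pm x)) =
      (\<Sum>x\<in>paulis n. pm x * G x) - (\<Sum>x\<in>paulis n. \<bar>pm x - pq x\<bar>) - e * (\<Sum>x\<in>paulis n. pq x)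
      - (\<Sum>x\<in>paulis n. if gd x then 0 else pm x)"
    by (simp add: sum_subtractf sum_distrib_left)
  finally have "(\<Sum>x\<in>paulis n. (if gd x then G x - e else 0) * pq x) \<ge>
       (1 + Re (tr n (opmult n \<rho> \<sigma>))) / 2 - 2 * tv_dist n (p_mix n \<rho> \<sigma>) q - e - \<epsilon>"
    using F tv hb' sq by (simp only: sq mult_1_right)
  then show "(\<Sum>x\<in>paulis n. (if tau < (alpha n \<rho> x)\<^sup>2 + (alpha n \<sigma> x)\<^sup>2 then Gfun g0 (alpha n \<rho> x) (alpha n \<sigma> x) - e else 0) * pmf q x)
           \<ge> (1 + Re (tr n (opmult n \<rho> \<sigma>))) / 2 - 2 * tv_dist n (p_mix n \<rho> \<sigma>) q - e - \<epsilon>"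
    unfolding gd_def G_def pq_def by simp
  have "(\<Sum>x\<in>paulis n. (if gd x then G x + e else 1) * pq x) \<le>
        (\<Sum>x\<in>paulis n. pm x * G x + \<bar>pm x - pq x\<bar> + e * pq x + (if gd x then 0 else pm x))"
    by (intro sum_mono up)
  also have "(\<Sum>x\<in>paulis n. pm x * G x + \<bar>pm x - pq x\<bar> + e * pq x + (if gd x then 0 else pm x)) =
      (\<Sum>x\<in>paulis n. pm x * G x) + (\<Sum>x\<in>paulis n. \<bar>pm x - pq x\<bar>) + e * (\<Sum>x\<in>paulis n. pq x)
      + (\<Sum>x\<in>paulis n. if gd x then 0 else pm x)"
    by (simp add: sum.distrib sum_distrib_left)
  finally have "(\<Sum>x\<in>paulis n. (if gd x then G x + e else 1) * pq x) \<le>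
       (1 + Re (tr n (opmult n \<rho> \<sigma>))) / 2 + 2 * tv_dist n (p_mix n \<rho> \<sigma>) q + e + \<epsilon>"
    using F tv hb' sq by (simp only: sq mult_1_right)
  then show "(\<Sum>x\<in>paulis n. (if tau < (alpha n \<rho> x)\<^sup>2 + (alpha n \<sigma> x)\<^sup>2 then Gfun g0 (alpha n \<rho> x) (alpha n \<sigma> x) + e else 1) * pmf q x)
           \<le> (1 + Re (tr n (opmult n \<rho> \<sigma>))) / 2 + 2 * tv_dist n (p_mix n \<rho> \<sigma>) q + e + \<epsilon>"
    unfolding gd_def G_def pq_def by simp
qed


lemma pointwise:
  assumes g: "0 \<le> g0" "g0 \<le> 1" and eps: "\<epsilon> > 0" "2 * \<epsilon>\<^sup>2 \<le> 1" and w: "w > 0"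
    and t: "t \<ge> 0" "t\<^sup>2 \<le> \<epsilon> ^ 3 * w"
    and du: "\<bar>u - a\<bar> < t" and dv: "\<bar>v - b\<bar> < t"
  shows "(if \<epsilon> * w < a\<^sup>2 + b\<^sup>2 then Gfun g0 a b - 2 * \<epsilon> else 0) \<le> Gfun g0 u v \<and>
         Gfun g0 u v \<le> (if \<epsilon> * w < a\<^sup>2 + b\<^sup>2 then Gfun g0 a b + 2 * \<epsilon> else 1)"
proof (cases "\<epsilon> * w < a\<^sup>2 + b\<^sup>2")
  case False then show ?thesis using G_range[OF g] by simp
next
  case True
  have ew: "\<epsilon> * w > 0" using eps w by simp
  have A: "a\<^sup>2 + b\<^sup>2 > 0" using True ew by linarith
  have e3: "2 * (\<epsilon> ^ 3 * w) \<le> \<epsilon> * w"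
  proof -
    have "2 * (\<epsilon> ^ 3 * w) = (2 * \<epsilon>\<^sup>2) * (\<epsilon> * w)" by (simp add: power2_eq_square power3_eq_cube)
    also have "\<dots> \<le> 1 * (\<epsilon> * w)" using eps ew by (intro mult_right_mono) auto
    finally show ?thesis by simp
  qed
  have U: "u\<^sup>2 + v\<^sup>2 > 0"
  proof (rule ccontr)
    assume "\<not> u\<^sup>2 + v\<^sup>2 > 0"
    then have "u = 0" "v = 0" by (auto simp: not_less sum_power2_le_zero_iff)
    then have "\<bar>a\<bar> < t" "\<bar>b\<bar> < t" using du dv by auto
    then have "\<bar>a\<bar>\<^sup>2 < t\<^sup>2" "\<bar>b\<bar>\<^sup>2 < t\<^sup>2"
      by (intro power_strict_mono; simp)+
    then have "a\<^sup>2 < t\<^sup>2" "b\<^sup>2 < t\<^sup>2" by simp_all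
    then have "a\<^sup>2 + b\<^sup>2 < \<epsilon> * w" using t e3 by linarith
    then show False using True by linarith
  qed
  define D where "D = Gfun g0 u v - Gfun g0 a b"
  have lip: "D\<^sup>2 * (a\<^sup>2 + b\<^sup>2) \<le> 2 * t\<^sup>2"
    unfolding D_def by (rule G_lip[OF U A]) (use du dv in auto)
  have "D\<^sup>2 * (\<epsilon> * w) \<le> D\<^sup>2 * (a\<^sup>2 + b\<^sup>2)" using True by (intro mult_left_mono) auto
  also have "\<dots> \<le> 2 * (\<epsilon> ^ 3 * w)" using lip t by linarith
  also have "\<dots> = (2 * \<epsilon>\<^sup>2) * (\<epsilon> * w)" by (simp add: power2_eq_square power3_eq_cube)
  finally have "D\<^sup>2 \<le> 2 * \<epsilon>\<^sup>2" using ew by (rule mult_right_le_imp_le)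
  moreover have "2 * \<epsilon>\<^sup>2 \<le> (2 * \<epsilon>)\<^sup>2" by (simp add: power2_eq_square)
  ultimately have "D\<^sup>2 \<le> (2 * \<epsilon>)\<^sup>2" by linarith
  then have "\<bar>D\<bar> \<le> \<bar>2 * \<epsilon>\<bar>" by (simp only: abs_le_square_iff)
  then have "\<bar>D\<bar> \<le> 2 * \<epsilon>" using eps by simp
  then show ?thesis using True by (simp add: D_def abs_le_iff)
qed

lemma sum_list_01:
  assumes "\<And>y. y \<in> set ts \<Longrightarrow> 0 \<le> h y \<and> h y \<le> (1::real)"
  shows "0 \<le> sum_list (map h ts) \<and> sum_list (map h ts) \<le> real (length ts)"
  using assms
proof (induction ts)
  case Nil then show ?case by simp
next
  case (Cons y ts)
  have "0 \<le> h y" "h y \<le> 1" using Cons.prems by auto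
  moreover have "0 \<le> sum_list (map h ts) \<and> sum_list (map h ts) \<le> real (length ts)"
    using Cons.IH Cons.prems by auto
  ultimately show ?case by simp
qed

lemma log_ge_ln: "y \<ge> 1 \<Longrightarrow> log 2 y \<ge> ln y"
proof -
  assume y: "y \<ge> 1"
  have l2: "0 < ln (2::real)" "ln (2::real) < 1" using ln_2_less_1 by auto
  have "ln y * ln 2 \<le> ln y * 1" using y l2 by (intro mult_left_mono) auto
  then show ?thesis using l2 by (simp add: log_def field_simps)
qed

lemma exp_neg_log: "y \<ge> 1 \<Longrightarrow> exp (- log 2 y) \<le> 1 / y"
proof -
  assume y: "y \<ge> 1"
  have "exp (- log 2 y) \<le> exp (- ln y)" using log_ge_ln[OF y] by simp
  also have "exp (- ln y) = 1 / y" using y by (simp add: exp_minus exp_ln inverse_eq_divide)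
  finally show ?thesis .
qed


theorem corollary5:
  fixes n N1 N2 :: nat and \<rho> \<sigma> :: op and q :: "(bool \<times> bool) list pmf"
    and \<epsilon> \<delta> \<Delta> g0 :: real
  assumes "pure_state n \<rho>" and "pure_state n \<sigma>"
    and "\<epsilon> > 0" and "\<delta> > 0"
    and "0 \<le> g0" and "g0 \<le> 1"
    and "set_pmf q \<subseteq> paulis n"
    and "tv_dist n (p_mix n \<rho> \<sigma>) q < \<Delta>"
    and "real N1 \<ge> 1 / (2 * \<epsilon>\<^sup>2) * log 2 (8 / \<delta>)"
    and "real N2 \<ge> 2 / min (\<epsilon> ^ 4) (\<epsilon>\<^sup>2 * 2 powr (- 2 * max (M0 n \<rho>) (M0 n \<sigma>)))
                    * log 2 (8 * real N1 / \<delta>)"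
  shows "measure_pmf.prob (sym_protocol n \<rho> \<sigma> q N1 N2 g0)
           {v. \<bar>v - (1 + Re (tr n (opmult n \<rho> \<sigma>))) / 2\<bar> \<le> 5 * \<epsilon> + 2 * \<Delta>}
         \<ge> 1 - \<delta>"
proof -
  note pr = assms(1) and ps = assms(2) and eps = assms(3) and del = assms(4) and g = assms(5,6)
    and qP = assms(7) and tvD = assms(8) and hN1 = assms(9) and hN2 = assms(10)
  define F where "F = (1 + Re (tr n (opmult n \<rho> \<sigma>))) / 2"
  define T where "T = {v. \<bar>v - F\<bar> \<le> 5 * \<epsilon> + 2 * \<Delta>}"
  define Gt where "Gt = (\<lambda>(x::(bool \<times> bool) list, u::real, v::real). Gfun g0 u v)"
  define R where "R = Rnd n \<rho> \<sigma> q N2"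
  define mean where "mean = (\<lambda>ts. sum_list (map Gt ts) / real N1)"
  have sym: "sym_protocol n \<rho> \<sigma> q N1 N2 g0 = map_pmf mean (replicate_pmf N1 R)"
    unfolding sym_eq mean_def Gt_def R_def ..
  have tv0: "tv_dist n (p_mix n \<rho> \<sigma>) q \<ge> 0" by (simp add: tv_dist_def sum_nonneg)
  have Dpos: "\<Delta> > 0" using tv0 tvD by linarith
  have Fsum: "F = (\<Sum>x\<in>paulis n. p_mix n \<rho> \<sigma> x * Gfun g0 (alpha n \<rho> x) (alpha n \<sigma> x))"
    using f_eq[OF pr ps] by (simp add: F_def)
  have F01: "0 \<le> F \<and> F \<le> 1"
  proof
    show "0 \<le> F" unfolding Fsum using G_range[OF g] pmix_nonneg by (intro sum_nonneg) simp
    have "F \<le> (\<Sum>x\<in>paulis n. p_mix n \<rho> \<sigma> x)" unfolding Fsum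
      using G_range[OF g] pmix_nonneg by (intro sum_mono mult_right_le_one_le) auto
    then show "F \<le> 1" using sum_pmix[OF pr ps] by simp
  qed
  have Gt01: "0 \<le> Gt y \<and> Gt y \<le> 1" for y
    using G_range[OF g] by (auto simp: Gt_def split: prod.splits)
  have mean01: "0 \<le> mean ts \<and> mean ts \<le> 1" if "length ts = N1" for ts
  proof -
    have "0 \<le> sum_list (map Gt ts) \<and> sum_list (map Gt ts) \<le> real (length ts)"
      by (rule sum_list_01) (use Gt01 in auto)
    then show ?thesis using that by (cases "N1 = 0") (auto simp: mean_def field_simps)
  qed
  have probT: "measure_pmf.prob (sym_protocol n \<rho> \<sigma> q N1 N2 g0) T =
      measure_pmf.prob (replicate_pmf N1 R) (mean -` T)"
    unfolding sym by simp
  show ?thesis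
  proof (cases "\<delta> \<ge> 1 \<or> 5 * \<epsilon> \<ge> 1")
    case True
    show ?thesis
    proof (cases "\<delta> \<ge> 1")
      case True
      then show ?thesis using measure_nonneg[of "measure_pmf (sym_protocol n \<rho> \<sigma> q N1 N2 g0)"] by smt
    next
      case False
      then have e5: "5 * \<epsilon> \<ge> 1" using \<open>\<delta> \<ge> 1 \<or> 5 * \<epsilon> \<ge> 1\<close> by simp
      have "AE ts in measure_pmf (replicate_pmf N1 R). ts \<in> mean -` T"
      proof (rule AE_pmfI)
        fix ts assume "ts \<in> set_pmf (replicate_pmf N1 R)"
        then have "length ts = N1" by (simp add: set_replicate_pmf)
        then have "0 \<le> mean ts \<and> mean ts \<le> 1" by (rule mean01)
        then show "ts \<in> mean -` T" using F01 e5 Dpos by (auto simp: T_def abs_le_iff)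
      qed
      then have "measure_pmf.prob (replicate_pmf N1 R) (mean -` T) = 1"
        by (simp add: measure_pmf.prob_eq_1)
      then show ?thesis using probT del unfolding T_def F_def by simp
    qed
  next
    case False
    then have d1: "\<delta> < 1" and e5: "5 * \<epsilon> < 1" by auto

    define Mx where "Mx = max (M0 n \<rho>) (M0 n \<sigma>)"
    define w where "w = 2 powr (- Mx)"
    define m where "m = min (\<epsilon> ^ 4) (\<epsilon>\<^sup>2 * w\<^sup>2)"
    define t where "t = sqrt m"
    define tau where "tau = \<epsilon> * w"
    define a where "a = alpha n \<rho>"
    define b where "b = alpha n \<sigma>"
    define Lf where "Lf x = (if tau < (a x)\<^sup>2 + (b x)\<^sup>2 then Gfun g0 (a x) (b x) - 2 * \<epsilon> else 0)" for x
    define Uf where "Uf x = (if tau < (a x)\<^sup>2 + (b x)\<^sup>2 then Gfun g0 (a x) (b x) + 2 * \<epsilon> else 1)" for x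
    define bad where "bad = {(x, u, v). \<bar>u - alpha n \<rho> x\<bar> \<ge> t \<or> \<bar>v - alpha n \<sigma> x\<bar> \<ge> t}"
    define L where "L = log 2 (8 * real N1 / \<delta>)"
    have w0: "w > 0" by (simp add: w_def)
    have pw: "2 powr (- 2 * Mx) = w\<^sup>2"
    proof -
      have "- 2 * Mx = - Mx + - Mx" by simp
      then show ?thesis by (simp only: w_def powr_add power2_eq_square)
    qed
    have hN2': "real N2 \<ge> 2 / m * L"
      using hN2 unfolding m_def L_def Mx_def[symmetric] pw .
    have m0: "m > 0" using eps w0 by (simp add: m_def)
    have m3: "m \<le> \<epsilon> ^ 3 * w"
    proof (cases "\<epsilon> \<le> w")
      case True
      have "m \<le> \<epsilon> ^ 4" by (simp add: m_def)
      also have "\<epsilon> ^ 4 = \<epsilon> ^ 3 * \<epsilon>" by (simp add: power_Suc2[symmetric] del: power_Suc)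
      also have "\<dots> \<le> \<epsilon> ^ 3 * w" using True eps by (intro mult_left_mono) auto
      finally show ?thesis .
    next
      case False
      have "m \<le> \<epsilon>\<^sup>2 * w\<^sup>2" by (simp add: m_def)
      also have "\<epsilon>\<^sup>2 * w\<^sup>2 = (\<epsilon>\<^sup>2 * w) * w" by (simp add: power2_eq_square)
      also have "\<dots> \<le> (\<epsilon>\<^sup>2 * w) * \<epsilon>" using False eps w0 by (intro mult_left_mono) auto
      also have "\<dots> = \<epsilon> ^ 3 * w" by (simp add: power2_eq_square power3_eq_cube)
      finally show ?thesis .
    qed
    have t0: "t \<ge> 0" and tm: "t\<^sup>2 = m" using m0 by (simp_all add: t_def)
    have ee: "2 * \<epsilon>\<^sup>2 \<le> 1"
    proof -
      have "\<epsilon> \<le> 1/5" using e5 by simp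
      then have "\<epsilon>\<^sup>2 \<le> (1/5)\<^sup>2" using eps by (intro power_mono) auto
      moreover have "(1/5::real)\<^sup>2 = 1/25" by (simp add: power2_eq_square)
      ultimately show ?thesis by linarith
    qed
    have l8: "log 2 (8 / \<delta>) > 0" using del d1 by (simp add: field_simps)
    have N1pos: "N1 > 0"
    proof -
      have "1 / (2 * \<epsilon>\<^sup>2) * log 2 (8 / \<delta>) > 0" using eps l8 by simp
      then show ?thesis using hN1 by simp
    qed
    have y1: "8 * real N1 / \<delta> \<ge> 1" using N1pos del d1 by (simp add: field_simps)
    have L0: "L > 0" unfolding L_def using y1 N1pos del d1 by (simp add: field_simps)
    have N2m: "real N2 * m \<ge> 2 * L"
    proof -
      have "2 / m * L * m \<le> real N2 * m" using hN2' m0 by (intro mult_right_mono) auto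
      then show ?thesis using m0 by simp
    qed
    have N2pos: "N2 > 0"
    proof -
      have "2 / m * L > 0" using m0 L0 by simp
      then show ?thesis using hN2' by simp
    qed
    have pbad: "measure_pmf.prob R bad \<le> \<delta> / (2 * real N1)"
    proof -
      have "measure_pmf.prob R bad \<le> 4 * exp (- real N2 * t\<^sup>2 / 2)"
        unfolding R_def bad_def by (rule Rnd_bad[OF pr ps qP N2pos t0])
      also have "exp (- real N2 * t\<^sup>2 / 2) \<le> exp (- L)" using N2m tm by simp
      also have "exp (- L) \<le> 1 / (8 * real N1 / \<delta>)" unfolding L_def by (rule exp_neg_log[OF y1])
      finally show ?thesis using N1pos del by (simp add: field_simps)
    qed
    define E3 where "E3 = {ts :: ((bool \<times> bool) list \<times> real \<times> real) list. \<exists>y\<in>set ts. y \<in> bad}"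
    have pE3: "measure_pmf.prob (replicate_pmf N1 R) E3 \<le> \<delta> / 2"
    proof -
      have "measure_pmf.prob (replicate_pmf N1 R) E3 \<le> real N1 * measure_pmf.prob R bad"
        unfolding E3_def by (rule union_rep)
      also have "\<dots> \<le> real N1 * (\<delta> / (2 * real N1))" using pbad by (intro mult_left_mono) auto
      also have "\<dots> = \<delta> / 2" using N1pos by simp
      finally show ?thesis .
    qed
    have expb: "exp (- 2 * real N1 * (2 * \<epsilon>)\<^sup>2 / 4) \<le> \<delta> / 8"
    proof -
      have "2 * \<epsilon>\<^sup>2 * (1 / (2 * \<epsilon>\<^sup>2) * log 2 (8 / \<delta>)) \<le> 2 * \<epsilon>\<^sup>2 * real N1"
        using hN1 eps by (intro mult_left_mono) auto
      then have h: "log 2 (8 / \<delta>) \<le> 2 * real N1 * \<epsilon>\<^sup>2" using eps by (simp add: mult_ac)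
      have "exp (- 2 * real N1 * (2 * \<epsilon>)\<^sup>2 / 4) = exp (- (2 * real N1 * \<epsilon>\<^sup>2))"
        by (simp add: power2_eq_square)
      also have "\<dots> \<le> exp (- log 2 (8 / \<delta>))" using h by simp
      also have "\<dots> \<le> 1 / (8 / \<delta>)" using del d1 by (intro exp_neg_log) (simp add: field_simps)
      finally show ?thesis by simp
    qed
    have ELR: "measure_pmf.expectation R (\<lambda>y. Lf (fst y)) = measure_pmf.expectation q Lf"
    proof -
      have "measure_pmf.expectation R (\<lambda>y. Lf (fst y)) = measure_pmf.expectation (map_pmf fst R) Lf" by simp
      then show ?thesis by (simp add: R_def fst_Rnd)
    qed
    have EUR: "measure_pmf.expectation R (\<lambda>y. Uf (fst y)) = measure_pmf.expectation q Uf"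
    proof -
      have "measure_pmf.expectation R (\<lambda>y. Uf (fst y)) = measure_pmf.expectation (map_pmf fst R) Uf" by simp
      then show ?thesis by (simp add: R_def fst_Rnd)
    qed
    have Lr: "Lf x \<in> {-1..1}" for x using G_range[OF g, of "a x" "b x"] e5 eps by (auto simp: Lf_def)
    have Ur: "Uf x \<in> {0..2}" for x using G_range[OF g, of "a x" "b x"] e5 eps by (auto simp: Uf_def)
    define E1 where "E1 = {ts :: ((bool \<times> bool) list \<times> real \<times> real) list. sum_list (map (\<lambda>y. Lf (fst y)) ts) / real N1 \<le> measure_pmf.expectation q Lf - 2 * \<epsilon>}"
    define E2 where "E2 = {ts :: ((bool \<times> bool) list \<times> real \<times> real) list. sum_list (map (\<lambda>y. Uf (fst y)) ts) / real N1 \<ge> measure_pmf.expectation q Uf + 2 * \<epsilon>}"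
    have pE1: "measure_pmf.prob (replicate_pmf N1 R) E1 \<le> \<delta> / 8"
    proof -
      have "measure_pmf.prob (replicate_pmf N1 R) E1 \<le> exp (-2 * real N1 * (2 * \<epsilon>)\<^sup>2 / (1 - (-1))\<^sup>2)"
        using hoeff_rep[of R "\<lambda>y. Lf (fst y)" "-1" 1 N1 "2 * \<epsilon>"] Lr N1pos eps
        unfolding E1_def ELR by auto
      then show ?thesis using expb by simp
    qed
    have pE2: "measure_pmf.prob (replicate_pmf N1 R) E2 \<le> \<delta> / 8"
    proof -
      have "measure_pmf.prob (replicate_pmf N1 R) E2 \<le> exp (-2 * real N1 * (2 * \<epsilon>)\<^sup>2 / (2 - 0)\<^sup>2)"
        using hoeff_rep[of R "\<lambda>y. Uf (fst y)" 0 2 N1 "2 * \<epsilon>"] Ur N1pos eps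
        unfolding E2_def EUR by auto
      then show ?thesis using expb by simp
    qed
    have hb: "(\<Sum>x\<in>paulis n. if tau < (alpha n \<rho> x)\<^sup>2 + (alpha n \<sigma> x)\<^sup>2 then 0 else p_mix n \<rho> \<sigma> x) \<le> \<epsilon>"
      unfolding tau_def w_def Mx_def by (rule bad_mass[OF eps])
    have EB: "measure_pmf.expectation q Lf \<ge> F - 2 * tv_dist n (p_mix n \<rho> \<sigma>) q - 2 * \<epsilon> - \<epsilon>"
         "measure_pmf.expectation q Uf \<le> F + 2 * tv_dist n (p_mix n \<rho> \<sigma>) q + 2 * \<epsilon> + \<epsilon>"
    proof -
      have "measure_pmf.expectation q Lf = (\<Sum>x\<in>paulis n. Lf x * pmf q x)"
        by (rule integral_measure_pmf_real) (use qP in auto)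
      then show "measure_pmf.expectation q Lf \<ge> F - 2 * tv_dist n (p_mix n \<rho> \<sigma>) q - 2 * \<epsilon> - \<epsilon>"
        using expect_bounds(1)[OF pr ps qP g _ hb, of "2 * \<epsilon>"] eps
        unfolding Lf_def a_def b_def F_def by simp
      have "measure_pmf.expectation q Uf = (\<Sum>x\<in>paulis n. Uf x * pmf q x)"
        by (rule integral_measure_pmf_real) (use qP in auto)
      then show "measure_pmf.expectation q Uf \<le> F + 2 * tv_dist n (p_mix n \<rho> \<sigma>) q + 2 * \<epsilon> + \<epsilon>"
        using expect_bounds(2)[OF pr ps qP g _ hb, of "2 * \<epsilon>"] eps
        unfolding Uf_def a_def b_def F_def by simp
    qed
    have incl: "ts \<in> E1 \<union> E2 \<union> E3" if ts: "ts \<in> set_pmf (replicate_pmf N1 R)" "ts \<notin> mean -` T" for ts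
    proof (rule ccontr)
      assume "ts \<notin> E1 \<union> E2 \<union> E3"
      then have n1: "ts \<notin> E1" and n2: "ts \<notin> E2" and n3: "ts \<notin> E3" by auto
      have len: "length ts = N1" and inR: "\<And>y. y \<in> set ts \<Longrightarrow> y \<in> set_pmf R"
        using ts(1) by (auto simp: set_replicate_pmf)
      have pw: "Lf (fst y) \<le> Gt y \<and> Gt y \<le> Uf (fst y)" if y: "y \<in> set ts" for y
      proof -
        obtain x u v where yx: "y = (x, u, v)" by (cases y) auto
        have "y \<notin> bad" using n3 y by (auto simp: E3_def)
        then have du: "\<bar>u - a x\<bar> < t" and dv: "\<bar>v - b x\<bar> < t"
          by (auto simp: bad_def yx a_def b_def)
        have "(if \<epsilon> * w < (a x)\<^sup>2 + (b x)\<^sup>2 then Gfun g0 (a x) (b x) - 2 * \<epsilon> else 0) \<le> Gfun g0 u v \<and>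
              Gfun g0 u v \<le> (if \<epsilon> * w < (a x)\<^sup>2 + (b x)\<^sup>2 then Gfun g0 (a x) (b x) + 2 * \<epsilon> else 1)"
          by (rule pointwise[OF g eps ee w0 t0 _ du dv]) (use tm m3 in simp)
        then show ?thesis by (simp add: yx Lf_def Uf_def Gt_def tau_def)
      qed
      have s1: "sum_list (map (\<lambda>y. Lf (fst y)) ts) \<le> sum_list (map Gt ts)"
        using pw by (intro sum_list_mono) auto
      have s2: "sum_list (map Gt ts) \<le> sum_list (map (\<lambda>y. Uf (fst y)) ts)"
        using pw by (intro sum_list_mono) auto
      have m1: "sum_list (map (\<lambda>y. Lf (fst y)) ts) / real N1 \<le> mean ts"
        unfolding mean_def using s1 N1pos by (intro divide_right_mono) auto
      have m2: "mean ts \<le> sum_list (map (\<lambda>y. Uf (fst y)) ts) / real N1"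
        unfolding mean_def using s2 N1pos by (intro divide_right_mono) auto
      have "sum_list (map (\<lambda>y. Lf (fst y)) ts) / real N1 > measure_pmf.expectation q Lf - 2 * \<epsilon>"
        using n1 by (simp add: E1_def)
      moreover have "sum_list (map (\<lambda>y. Uf (fst y)) ts) / real N1 < measure_pmf.expectation q Uf + 2 * \<epsilon>"
        using n2 by (simp add: E2_def)
      ultimately have "\<bar>mean ts - F\<bar> \<le> 5 * \<epsilon> + 2 * \<Delta>"
        using m1 m2 EB tvD by (simp add: abs_le_iff)
      then show False using ts(2) by (simp add: T_def)
    qed
    have "1 - measure_pmf.prob (replicate_pmf N1 R) (mean -` T) =
          measure_pmf.prob (replicate_pmf N1 R) (UNIV - mean -` T)"
      by (subst measure_pmf.prob_compl[symmetric]) auto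
    also have "\<dots> \<le> measure_pmf.prob (replicate_pmf N1 R) (E1 \<union> E2 \<union> E3)"
      by (rule measure_pmf.finite_measure_mono_AE) (use incl in \<open>auto intro!: AE_pmfI\<close>)
    also have "\<dots> \<le> measure_pmf.prob (replicate_pmf N1 R) (E1 \<union> E2) + measure_pmf.prob (replicate_pmf N1 R) E3"
      by (rule measure_Un_le) auto
    also have "measure_pmf.prob (replicate_pmf N1 R) (E1 \<union> E2) \<le>
       measure_pmf.prob (replicate_pmf N1 R) E1 + measure_pmf.prob (replicate_pmf N1 R) E2"
      by (rule measure_Un_le) auto
    finally have "1 - measure_pmf.prob (replicate_pmf N1 R) (mean -` T) \<le> \<delta>"
      using pE1 pE2 pE3 del by linarith
    then show ?thesis using probT unfolding T_def F_def by simp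
  qed
qed


end
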